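(* Let $N=1$, $A_0,A_1\in\mathbb{C}^{n\times n}$, $u_0\in\mathbb{C}^n$, $t\ge0$, $\varepsilon\in\mathbb{C}$ and $k\ge1$. Then $$\Big\|u(t,\varepsilon)-\sum_{\ell=0}^{k-1}\varepsilon^\ell c_\ell(t)\Big\|\le\frac{e^{t(\mu(A_0)+|\varepsilon|\|A_1\|)}\,\big(|\varepsilon|\,\|tA_1\|\big)^k}{k!}\,\|u_0\|.$$
   Context: $\|\cdot\|$ is the Euclidean norm and induced spectral norm. $u(t,\varepsilon):=\exp(t(A_0+\varepsilon A_1))u_0=\sum_{\ell\ge0}\varepsilon^\ell c_\ell(t)$ is the Taylor expansion in $\varepsilon$. $\mu(B):=\max\Lambda((B+B^* )/2)$ is the logarithmic norm. *)

theory Defs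
  imports "HOL-Analysis.Analysis"
begin

text \<open>Complex n x n matrices are rendered as complex^'n^'n (n = CARD('n)),
  vectors of C^n as complex^'n (norm = Euclidean norm).\<close>

primrec mpow :: "complex^'n^'n \<Rightarrow> nat \<Rightarrow> complex^'n^'n" where
  "mpow M 0 = mat 1"
| "mpow M (Suc k) = M ** mpow M k"

definition mscale :: "complex \<Rightarrow> complex^'n^'n \<Rightarrow> complex^'n^'n" where
  "mscale c M = (\<chi> i j. c * M $ i $ j)"

definition mexp :: "complex^'n^'n \<Rightarrow> complex^'n^'n" where
  "mexp M = (\<Sum>k. mscale (1 / of_nat (fact k)) (mpow M k))"

definition mnorm :: "complex^'n^'n \<Rightarrow> real" where
  "mnorm M = onorm (\<lambda>x. M *v x)"

definition adjoint_mat :: "complex^'n^'n \<Rightarrow> complex^'n^'n" where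
  "adjoint_mat B = (\<chi> i j. cnj (B $ j $ i))"

text \<open>Logarithmic norm: largest eigenvalue of the Hermitian part (B + B^*)/2
  (whose eigenvalues are real).\<close>
definition lognorm :: "complex^'n^'n \<Rightarrow> real" where
  "lognorm B = Max {lam::real. \<exists>x. x \<noteq> 0 \<and>
      mscale (1/2) (B + adjoint_mat B) *v x = of_real lam *s x}"

definition usol :: "complex^'n^'n \<Rightarrow> complex^'n^'n \<Rightarrow> complex^'n \<Rightarrow> real \<Rightarrow> complex \<Rightarrow> complex^'n" where
  "usol A0 A1 u0 t \<epsilon> = mexp (mscale (of_real t) (A0 + mscale \<epsilon> A1)) *v u0"

definition taylor_coeff :: "complex^'n^'n \<Rightarrow> complex^'n^'n \<Rightarrow> complex^'n \<Rightarrow> real \<Rightarrow> nat \<Rightarrow> complex^'n" where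
  "taylor_coeff A0 A1 u0 t = (THE c. \<forall>\<epsilon>. (\<lambda>l. (\<epsilon> ^ l) *s c l) sums usol A0 A1 u0 t \<epsilon>)"

end

theory Submission
  imports Defs "HOL-Analysis.Analysis"
begin


typedef (overloaded) ('a::finite) op = "UNIV :: ((complex^'a) \<Rightarrow>\<^sub>L (complex^'a)) set" by auto
setup_lifting type_definition_op

instantiation op :: (finite) real_normed_vector
begin
lift_definition norm_op :: "'a op \<Rightarrow> real" is norm .
lift_definition minus_op :: "'a op \<Rightarrow> 'a op \<Rightarrow> 'a op" is "(-)" .
lift_definition plus_op :: "'a op \<Rightarrow> 'a op \<Rightarrow> 'a op" is "(+)" .
lift_definition uminus_op :: "'a op \<Rightarrow> 'a op" is "uminus" .
lift_definition zero_op :: "'a op" is "0" .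
lift_definition scaleR_op :: "real \<Rightarrow> 'a op \<Rightarrow> 'a op" is "scaleR" .
definition dist_op :: "'a op \<Rightarrow> 'a op \<Rightarrow> real" where "dist_op a b = norm (a - b)"
definition uniformity_op :: "('a op \<times> 'a op) filter" where
  "uniformity_op = (INF e\<in>{0 <..}. principal {(x, y). dist x y < e})"
definition open_op :: "'a op set \<Rightarrow> bool"
  where "open_op S = (\<forall>x\<in>S. \<forall>\<^sub>F (x', y) in uniformity. x' = x \<longrightarrow> y \<in> S)"
definition sgn_op :: "'a op \<Rightarrow> 'a op" where "sgn_op x = scaleR (inverse (norm x)) x"
instance
  apply standard
  unfolding dist_op_def open_op_def sgn_op_def uniformity_op_def
  apply (rule refl | (transfer, force simp: norm_triangle_ineq algebra_simps scaleR_add_right scaleR_add_left))+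
  done
end

instantiation op :: (finite) real_normed_algebra_1
begin
lift_definition times_op :: "'a op \<Rightarrow> 'a op \<Rightarrow> 'a op" is "(o\<^sub>L)" .
lift_definition one_op :: "'a op" is "id_blinfun" .
instance
  apply standard
  apply (transfer; rule blinfun_eqI; simp add: blinfun.bilinear_simps)+
    apply transfer
    apply (rule notI)
    apply (drule arg_cong[where f="\<lambda>f. blinfun_apply f (axis undefined (1::complex))"])
    apply (simp add: axis_eq_0_iff)
   apply transfer apply (rule norm_blinfun_compose)
  apply transfer apply (rule norm_blinfun_id)
  done
end


lemma dist_op_rep: "dist x y = dist (Rep_op x) (Rep_op y)"
  by (simp add: dist_norm norm_op.rep_eq minus_op.rep_eq)

instance op :: (finite) banach
proof
  fix X :: "nat \<Rightarrow> 'a op" assume "Cauchy X"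
  hence "Cauchy (\<lambda>n. Rep_op (X n))" unfolding Cauchy_def dist_op_rep .
  then obtain L where L: "(\<lambda>n. Rep_op (X n)) \<longlonglongrightarrow> L"
    using Cauchy_convergent_iff convergent_def by blast
  have "X \<longlonglongrightarrow> Abs_op L"
    using L unfolding tendsto_iff dist_op_rep by (simp add: Abs_op_inverse)
  thus "convergent X" by (auto simp: convergent_def)
qed


definition ap :: "'a::finite op \<Rightarrow> complex^'a \<Rightarrow> complex^'a" where
  "ap F x = blinfun_apply (Rep_op F) x"

lemma ap_mult[simp]: "ap (F * G) x = ap F (ap G x)"
  by (simp add: ap_def times_op.rep_eq)
lemma ap_one[simp]: "ap 1 x = x"
  by (simp add: ap_def one_op.rep_eq)
lemma bounded_bilinear_ap: "bounded_bilinear ap"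
proof -
  have "bounded_bilinear (\<lambda>(F::'a op) x. blinfun_apply (Rep_op F) x)"
  proof
    fix a a' :: "'a op" and b b' :: "complex^'a" and r :: real
    show "blinfun_apply (Rep_op (a + a')) b = blinfun_apply (Rep_op a) b + blinfun_apply (Rep_op a') b"
      by (simp add: plus_op.rep_eq blinfun.bilinear_simps)
    show "blinfun_apply (Rep_op a) (b + b') = blinfun_apply (Rep_op a) b + blinfun_apply (Rep_op a) b'"
      by (simp add: blinfun.bilinear_simps)
    show "blinfun_apply (Rep_op (r *\<^sub>R a)) b = r *\<^sub>R blinfun_apply (Rep_op a) b"
      by (simp add: scaleR_op.rep_eq blinfun.bilinear_simps)
    show "blinfun_apply (Rep_op a) (r *\<^sub>R b) = r *\<^sub>R blinfun_apply (Rep_op a) b"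
      by (simp add: blinfun.bilinear_simps)
    show "\<exists>K. \<forall>a b. norm (blinfun_apply (Rep_op a) b) \<le> norm a * norm b * K"
      by (rule exI[where x=1]) (simp add: norm_op.rep_eq norm_blinfun)
  qed
  thus ?thesis unfolding ap_def[abs_def] .
qed

interpretation ap: bounded_bilinear ap by (rule bounded_bilinear_ap)

lemma norm_ap: "norm (ap F x) \<le> norm F * norm x"
  by (simp add: ap_def norm_op.rep_eq norm_blinfun)

definition mop :: "complex^'a^'a \<Rightarrow> 'a::finite op" where
  "mop M = Abs_op (Blinfun (\<lambda>x. M *v x))"

lemma bl_mv: "bounded_linear (\<lambda>x. (M::complex^'a::finite^'a) *v x)"
  by (rule linear_conv_bounded_linear[THEN iffD1]) simp

lemma ap_mop[simp]: "ap (mop M) x = M *v x"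
  by (simp add: ap_def mop_def Abs_op_inverse bounded_linear_Blinfun_apply[OF bl_mv])

lemma norm_mop: "norm (mop M) = mnorm M"
  by (simp add: norm_op.rep_eq mop_def Abs_op_inverse norm_blinfun.rep_eq
      bounded_linear_Blinfun_apply[OF bl_mv] mnorm_def)

lemma op_eqI: "(\<And>x. ap F x = ap G x) \<Longrightarrow> F = G"
  by (metis Rep_op_inject ap_def blinfun_eqI)

lemma mop_mult: "mop (M ** N) = mop M * mop N"
  by (rule op_eqI) (simp add: matrix_vector_mul_assoc)

lemma mop_one: "mop (mat 1) = 1"
  by (rule op_eqI) simp

lemma mop_mpow: "mop (mpow M k) = mop M ^ k"
  by (induction k) (simp_all add: mop_one mop_mult)

lemma mscale_mv: "mscale c M *v x = c *s (M *v x)"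
  by (simp add: mscale_def matrix_vector_mult_def vector_scalar_mult_def vec_eq_iff sum_distrib_left mult.assoc)

lemma cscaleR: "r *\<^sub>R (z::complex) = complex_of_real r * z"
  by (rule scaleR_conv_of_real)

lemma norm_axis_gen: "norm (axis j (c::'b::real_normed_vector) :: 'b^'n::finite) = norm c"
proof -
  have "(\<Sum>i\<in>(UNIV::'n set). (norm (if i = j then c else 0))^2) = (\<Sum>i\<in>(UNIV::'n set). if i = j then (norm c)^2 else 0)"
    by (rule sum.cong) auto
  thus ?thesis by (simp add: norm_vec_def L2_set_def axis_def)
qed

lemma norm_le_l1_vec: "norm (x::'b::real_normed_vector^'n::finite) \<le> (\<Sum>i\<in>UNIV. norm (x $ i))"
  unfolding norm_vec_def by (rule L2_set_le_sum) simp

definition Psi :: "'a::finite op \<Rightarrow> complex^'a^'a" where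
  "Psi F = (\<chi> i j. (ap F (axis j 1)) $ i)"

lemma mv_axis: "((M::complex^'a::finite^'a) *v axis j 1) $ i = M $ i $ j"
  by (simp add: matrix_vector_mult_def axis_def if_distrib cong: if_cong)

lemma Psi_mop: "Psi (mop M) = M"
  by (simp add: Psi_def mv_axis vec_eq_iff)

lemma bounded_linear_Psi: "bounded_linear (Psi :: 'a::finite op \<Rightarrow> _)"
proof (rule bounded_linear_intro[where K="of_nat (CARD('a) * CARD('a))"])
  fix F G :: "'a op" and r :: real
  show "Psi (F + G) = Psi F + Psi G"
    by (simp add: Psi_def vec_eq_iff ap.add_left)
  show "Psi (r *\<^sub>R F) = r *\<^sub>R Psi F"
    by (simp add: Psi_def vec_eq_iff ap.scaleR_left)
  have "norm (Psi F) \<le> (\<Sum>i\<in>UNIV. norm (Psi F $ i))" by (rule norm_le_l1_vec)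
  also have "\<dots> \<le> (\<Sum>i\<in>(UNIV::'a set). (\<Sum>j\<in>(UNIV::'a set). norm F))"
  proof (rule sum_mono)
    fix i
    have "norm (Psi F $ i) \<le> (\<Sum>j\<in>UNIV. norm (Psi F $ i $ j))" by (rule norm_le_l1_vec)
    also have "\<dots> \<le> (\<Sum>j\<in>(UNIV::'a set). norm F)"
    proof (rule sum_mono)
      fix j
      have "norm (Psi F $ i $ j) = norm ((ap F (axis j 1)) $ i)" by (simp add: Psi_def)
      also have "\<dots> \<le> norm (ap F (axis j 1))" by (rule Finite_Cartesian_Product.norm_nth_le)
      also have "\<dots> \<le> norm F * norm (axis j (1::complex))" by (rule norm_ap)
      also have "\<dots> = norm F" by (simp add: norm_axis_gen)
      finally show "norm (Psi F $ i $ j) \<le> norm F" .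
    qed
    finally show "norm (Psi F $ i) \<le> (\<Sum>j\<in>(UNIV::'a set). norm F)" .
  qed
  also have "\<dots> = norm F * of_nat (CARD('a) * CARD('a))" by simp
  finally show "norm (Psi F) \<le> norm F * of_nat (CARD('a) * CARD('a))" .
qed

lemma mexp_term: "mscale (1 / of_nat (fact k)) (mpow M k) = Psi (mop M ^ k /\<^sub>R fact k)"
proof -
  have "Psi (mop M ^ k /\<^sub>R fact k) = (1 / fact k) *\<^sub>R Psi (mop M ^ k)"
    using linear_scale[OF bounded_linear.linear[OF bounded_linear_Psi]] by (simp add: divide_inverse)
  also have "\<dots> = (1 / fact k) *\<^sub>R mpow M k" by (simp add: mop_mpow[symmetric] Psi_mop)
  finally show ?thesis
    by (simp add: mscale_def vec_eq_iff cscaleR)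
qed

lemma mexp_sums: "(\<lambda>k. mscale (1 / of_nat (fact k)) (mpow M k)) sums Psi (exp (mop M))"
  unfolding mexp_term
  by (rule bounded_linear.sums[OF bounded_linear_Psi exp_converges])

lemma mexp_ap: "mexp M *v x = ap (exp (mop M)) x"
proof -
  have bl: "bounded_linear (\<lambda>N::complex^'a^'a. N *v x)"
    by (rule linear_conv_bounded_linear[THEN iffD1])
       (auto simp: linear_iff matrix_vector_mult_add_rdistrib vec_eq_iff matrix_vector_mult_def
          sum_distrib_left cscaleR algebra_simps sum.distrib)
  have s1: "(\<lambda>k. mscale (1 / of_nat (fact k)) (mpow M k) *v x) sums (mexp M *v x)"
  proof -
    have "mexp M = Psi (exp (mop M))" using sums_unique[OF mexp_sums[of M]] by (simp add: mexp_def)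
    thus ?thesis using bounded_linear.sums[OF bl mexp_sums[of M]] by simp
  qed
  have s2: "(\<lambda>k. ap (mop M ^ k /\<^sub>R fact k) x) sums ap (exp (mop M)) x"
    by (rule bounded_linear.sums[OF ap.bounded_linear_left exp_converges])
  have "(\<lambda>k. mscale (1 / of_nat (fact k)) (mpow M k) *v x) = (\<lambda>k. ap (mop M ^ k /\<^sub>R fact k) x)"
    apply (rule ext) apply (simp only: vec_eq_iff) by (simp add: mscale_mv ap.scaleR_left mop_mpow[symmetric] vec_eq_iff vector_scalar_mult_def cscaleR divide_inverse)
  with s1 s2 show ?thesis using sums_unique2 by metis
qed





section \<open>Logarithmic norm\<close>

lemma cinner: "(a::complex) \<bullet> b = Re (a * cnj b)"
  by (simp add: inner_complex_def)

lemma inner_mv_adj: "((M::complex^'n::finite^'n) *v z) \<bullet> y = z \<bullet> (adjoint_mat M *v y)"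
proof -
  have "(M *v z) \<bullet> y = Re (\<Sum>i\<in>UNIV. \<Sum>j\<in>UNIV. M $ i $ j * z $ j * cnj (y $ i))"
    by (simp add: inner_vec_def cinner matrix_vector_mult_def sum_distrib_right Re_sum)
  also have "\<dots> = Re (\<Sum>j\<in>UNIV. \<Sum>i\<in>UNIV. M $ i $ j * z $ j * cnj (y $ i))"
    by (subst sum.swap) rule
  also have "\<dots> = z \<bullet> (adjoint_mat M *v y)"
    by (simp add: inner_vec_def cinner matrix_vector_mult_def adjoint_mat_def sum_distrib_left Re_sum
        mult_ac)
  finally show ?thesis .
qed

lemma adj_adj: "adjoint_mat (adjoint_mat M) = M"
  by (simp add: adjoint_mat_def vec_eq_iff)

lemma mv_scale: "(M::complex^'n::finite^'n) *v (r *\<^sub>R x) = r *\<^sub>R (M *v x)"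
  using linear_scale[OF bounded_linear.linear[OF bl_mv]] .

lemma mv_add: "(M::complex^'n::finite^'n) *v (x + y) = M *v x + M *v y"
  using linear_add[OF bounded_linear.linear[OF bl_mv]] .

lemma ofreal_smult: "(complex_of_real r) *s (x::complex^'n) = r *\<^sub>R x"
  by (simp add: vec_eq_iff vector_scalar_mult_def cscaleR)

lemma quad_arg:
  fixes a b :: real
  assumes "\<And>s. s * a + s^2 * b \<le> 0"
  shows "a = 0"
proof -
  define s where "s = a / (1 + \<bar>b\<bar>)"
  have pos: "1 + \<bar>b\<bar> > 0" by simp
  have "s * a + s^2 * b \<le> 0" by (rule assms)
  hence "(a^2 * (1 + \<bar>b\<bar>) + a^2 * b) / (1 + \<bar>b\<bar>)^2 \<le> 0"
    using pos by (simp add: s_def power2_eq_square add_divide_distrib)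
  hence "a^2 * (1 + \<bar>b\<bar>) + a^2 * b \<le> 0"
    using pos by (simp add: divide_le_0_iff)
  moreover have "a^2 * (1 + \<bar>b\<bar>) + a^2 * b = a^2 * (1 + (\<bar>b\<bar> + b))" by algebra
  moreover have "\<bar>b\<bar> + b \<ge> 0" by simp
  ultimately have "a^2 \<le> 0"
    by (metis add_le_same_cancel1 mult_le_0_iff not_one_le_zero zero_le_power2 le_add_same_cancel1 order_trans)
  thus ?thesis by simp
qed

lemma rayleigh_max:
  fixes A :: "complex^'n::finite^'n"
  obtains y m where "norm y = 1" "\<And>x. (A *v x) \<bullet> x \<le> m * (norm x)^2"
    "mscale (1/2) (A + adjoint_mat A) *v y = of_real m *s y"
proof -
  let ?q = "\<lambda>x. (A *v x) \<bullet> x"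
  have "norm (axis undefined (1::complex) :: complex^'n) = 1" using norm_axis_gen[of undefined "1::complex"] by simp
  hence "(axis undefined (1::complex) :: complex^'n) \<in> sphere 0 1" by (simp add: dist_norm)
  hence ne: "sphere (0::complex^'n) 1 \<noteq> {}" by blast
  have cont: "continuous_on (sphere 0 1) ?q"
    by (intro continuous_intros linear_continuous_on bl_mv)
  obtain y where y: "y \<in> sphere 0 1" and ymax: "\<And>z. z \<in> sphere 0 1 \<Longrightarrow> ?q z \<le> ?q y"
    using continuous_attains_sup[OF compact_sphere ne cont] by blast
  define m where "m = ?q y"
  have ny: "norm y = 1" using y by simp
  have c1: "?q x \<le> m * (norm x)^2" for x
  proof (cases "x = 0")
    case True thus ?thesis by simp
  next
    case False
    define r where "r = 1 / norm x"
    have "r *\<^sub>R x \<in> sphere 0 1" using False by (simp add: r_def)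
    hence "?q (r *\<^sub>R x) \<le> m" using ymax m_def by blast
    hence "r^2 * ?q x \<le> m" by (simp add: mv_scale power2_eq_square)
    hence "(norm x)^2 * (r^2 * ?q x) \<le> (norm x)^2 * m" by (simp add: mult_left_mono)
    thus ?thesis using False by (simp add: r_def power2_eq_square field_simps)
  qed
  have c2: "(A *v y) \<bullet> z + (A *v z) \<bullet> y = 2 * m * (y \<bullet> z)" for z
  proof -
    have "s * ((A *v y) \<bullet> z + (A *v z) \<bullet> y - 2 * m * (y \<bullet> z)) + s^2 * (?q z - m * (z \<bullet> z)) \<le> 0" for s
    proof -
      have "?q (y + s *\<^sub>R z) \<le> m * (norm (y + s *\<^sub>R z))^2" by (rule c1)
      moreover have "?q (y + s *\<^sub>R z) = ?q y + s * ((A *v y) \<bullet> z + (A *v z) \<bullet> y) + s^2 * ?q z"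
      proof -
        have "A *v (y + s *\<^sub>R z) = A *v y + s *\<^sub>R (A *v z)" by (simp only: mv_add mv_scale)
        thus ?thesis by (simp add: inner_add_left inner_add_right power2_eq_square algebra_simps)
      qed
      moreover have "(norm (y + s *\<^sub>R z))^2 = 1 + 2 * s * (y \<bullet> z) + s^2 * (z \<bullet> z)"
      proof -
        have yy: "y \<bullet> y = 1" using ny by (simp add: power2_norm_eq_inner[symmetric])
        have "(norm (y + s *\<^sub>R z))^2 = (y + s *\<^sub>R z) \<bullet> (y + s *\<^sub>R z)" by (rule power2_norm_eq_inner)
        also have "\<dots> = y \<bullet> y + 2 * s * (y \<bullet> z) + s^2 * (z \<bullet> z)"
          by (simp add: inner_add_left inner_add_right inner_commute[of z y] power2_eq_square algebra_simps)
        finally show ?thesis using yy by simp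
      qed
      ultimately show ?thesis unfolding m_def by (simp add: algebra_simps)
    qed
    from quad_arg[OF this] show ?thesis by simp
  qed
  have c3: "A *v y + adjoint_mat A *v y = (2 * m) *\<^sub>R y"
  proof -
    let ?w = "A *v y + adjoint_mat A *v y - (2 * m) *\<^sub>R y"
    have "?w \<bullet> z = 0" for z
    proof -
      have "?w \<bullet> z = (A *v y) \<bullet> z + (A *v z) \<bullet> y - 2*m*(y \<bullet> z)"
        by (simp add: inner_diff_left inner_add_left inner_mv_adj[of A z y] inner_commute[of "adjoint_mat A *v y" z])
      thus ?thesis using c2[of z] by simp
    qed
    from this[of ?w] show ?thesis by simp
  qed
  have "mscale (1/2) (A + adjoint_mat A) *v y = (1/2) *s (A *v y + adjoint_mat A *v y)"
    by (simp add: mscale_mv matrix_vector_mult_add_rdistrib)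
  also have "\<dots> = of_real m *s y"
    by (simp add: c3 vec_eq_iff vector_scalar_mult_def cscaleR)
  finally show ?thesis using that[OF ny c1] by (simp add: m_def)
qed

lemma herm_selfadj:
  fixes A :: "complex^'n::finite^'n"
  defines "H \<equiv> mscale (1/2) (A + adjoint_mat A)"
  shows "(H *v x) \<bullet> z = x \<bullet> (H *v z)"
proof -
  have "adjoint_mat H = H"
    by (simp add: H_def adjoint_mat_def mscale_def vec_eq_iff add.commute)
  thus ?thesis using inner_mv_adj[of H x z] by simp
qed

lemma eig_finite:
  fixes A :: "complex^'n::finite^'n"
  shows "finite {lam::real. \<exists>x. x \<noteq> 0 \<and> mscale (1/2) (A + adjoint_mat A) *v x = of_real lam *s x}"
    (is "finite ?E")
proof -
  define H where "H = mscale (1/2) (A + adjoint_mat A)"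
  define g where "g lam = (SOME x. x \<noteq> 0 \<and> H *v x = of_real lam *s x)" for lam
  have g: "g l \<noteq> 0 \<and> H *v g l = l *\<^sub>R g l" if "l \<in> ?E" for l
  proof -
    have "\<exists>x. x \<noteq> 0 \<and> H *v x = of_real l *s x" using that by (simp add: H_def)
    from someI_ex[OF this] have "g l \<noteq> 0 \<and> H *v g l = of_real l *s g l" unfolding g_def .
    thus ?thesis by (simp only: ofreal_smult simp_thms)
  qed
  have inj: "inj_on g ?E"
  proof (rule inj_onI)
    fix l l' assume l: "l \<in> ?E" and l': "l' \<in> ?E" and eq: "g l = g l'"
    have "H *v g l = l *\<^sub>R g l" using g[OF l] by (rule conjunct2)
    moreover have "H *v g l' = l' *\<^sub>R g l'" using g[OF l'] by (rule conjunct2)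
    ultimately have "l *\<^sub>R g l = l' *\<^sub>R g l" using eq by metis
    hence "(l - l') *\<^sub>R g l = 0" by (simp add: scaleR_diff_left)
    thus "l = l'" using g[OF l] by simp
  qed
  have orth: "pairwise orthogonal (g ` ?E)"
  proof (rule pairwiseI)
    fix u v assume uv: "u \<in> g ` ?E" "v \<in> g ` ?E" "u \<noteq> v"
    then obtain l l' where l: "l \<in> ?E" and l': "l' \<in> ?E" and u: "u = g l" and v: "v = g l'"
      by (meson imageE)
    have "l \<noteq> l'" using uv(3) u v by auto
    have "(H *v u) \<bullet> v = u \<bullet> (H *v v)" unfolding H_def by (rule herm_selfadj)
    moreover have "H *v u = l *\<^sub>R u" using g[OF l] u by simp
    moreover have "H *v v = l' *\<^sub>R v" using g[OF l'] v by simp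
    ultimately have "l * (u \<bullet> v) = l' * (u \<bullet> v)" by simp
    hence "(l - l') * (u \<bullet> v) = 0" by (simp only: left_diff_distrib right_minus_eq)
    thus "orthogonal u v" using \<open>l \<noteq> l'\<close> by (simp add: orthogonal_def)
  qed
  have "0 \<notin> g ` ?E"
  proof
    assume "0 \<in> g ` ?E"
    then obtain l where "l \<in> ?E" "0 = g l" by (meson imageE)
    thus False using g by auto
  qed
  hence "independent (g ` ?E)" by (rule pairwise_orthogonal_independent[OF orth])
  hence "finite (g ` ?E)" by (rule finiteI_independent)
  thus ?thesis by (rule finite_imageD[OF _ inj])
qed

lemma lognorm_bound:
  fixes A :: "complex^'n::finite^'n"
  shows "(A *v x) \<bullet> x \<le> lognorm A * (norm x)^2"
proof -
  obtain y m where ny: "norm y = 1" and c1: "\<And>x. (A *v x) \<bullet> x \<le> m * (norm x)^2"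
    and ev: "mscale (1/2) (A + adjoint_mat A) *v y = of_real m *s y"
  proof (rule rayleigh_max[of A])
    fix y m assume "norm y = 1" "\<And>x. (A *v x) \<bullet> x \<le> m * (norm x)^2"
      "mscale (1/2) (A + adjoint_mat A) *v y = of_real m *s y"
    thus thesis by (rule that)
  qed
  have "y \<noteq> 0" using ny by auto
  hence "m \<in> {lam::real. \<exists>x. x \<noteq> 0 \<and> mscale (1/2) (A + adjoint_mat A) *v x = of_real lam *s x}"
    using ev by blast
  hence "m \<le> lognorm A"
    unfolding lognorm_def by (rule Max_ge[OF eig_finite])
  hence "m * (norm x)^2 \<le> lognorm A * (norm x)^2" by (rule mult_right_mono) simp
  thus ?thesis using c1[of x] by linarith
qed




lemma exp_deriv_ap:
  "((\<lambda>r. ap (exp (r *\<^sub>R B)) x) has_vector_derivative ap B (ap (exp (r *\<^sub>R B)) x)) (at r within S)"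
proof -
  have "((\<lambda>r. ap (exp (r *\<^sub>R B)) x) has_vector_derivative ap (B * exp (r *\<^sub>R B)) x) (at r within S)"
    by (rule bounded_linear.has_vector_derivative[OF ap.bounded_linear_left
          has_vector_derivative_at_within[OF exp_scaleR_has_vector_derivative_left]])
  thus ?thesis by simp
qed

lemma expbound:
  fixes B :: "'n::finite op"
  assumes diss: "\<And>z. (ap B z) \<bullet> z \<le> \<nu> * (norm z)^2" and s: "0 \<le> s"
  shows "norm (ap (exp (s *\<^sub>R B)) x) \<le> exp (s * \<nu>) * norm x"
proof -
  define y where "y r = ap (exp (r *\<^sub>R B)) x" for r
  have dy: "(y has_vector_derivative ap B (y r)) (at r)" for r
    unfolding y_def by (rule exp_deriv_ap)
  define f where "f r = exp (-2*\<nu>*r) * (y r \<bullet> y r)" for r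
  have df: "DERIV f r :> exp (-2*\<nu>*r) * (2 * (ap B (y r) \<bullet> y r) - 2 * \<nu> * (y r \<bullet> y r))" for r
  proof -
    have d1: "((\<lambda>r. y r \<bullet> y r) has_vector_derivative (y r \<bullet> ap B (y r) + ap B (y r) \<bullet> y r)) (at r)"
      by (rule bounded_bilinear.has_vector_derivative[OF bounded_bilinear_inner dy dy])
    hence d1': "((\<lambda>r. y r \<bullet> y r) has_real_derivative 2 * (ap B (y r) \<bullet> y r)) (at r)"
      by (simp add: has_real_derivative_iff_has_vector_derivative inner_commute)
    have d2: "((\<lambda>r. exp (-2*\<nu>*r)) has_real_derivative (-2*\<nu>) * exp(-2*\<nu>*r)) (at r)"
      by (auto intro!: derivative_eq_intros)
    show ?thesis unfolding f_def using DERIV_mult[OF d2 d1'] by (simp add: algebra_simps)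
  qed
  have "f s \<le> f 0"
  proof (rule DERIV_nonpos_imp_nonincreasing[OF s])
    fix r assume "0 \<le> r" "r \<le> s"
    have "ap B (y r) \<bullet> y r \<le> \<nu> * (y r \<bullet> y r)" using diss[of "y r"] by (simp add: power2_norm_eq_inner)
    hence "exp (-2*\<nu>*r) * (2 * (ap B (y r) \<bullet> y r) - 2 * \<nu> * (y r \<bullet> y r)) \<le> 0"
      by (simp add: mult_nonneg_nonpos)
    thus "\<exists>y. DERIV f r :> y \<and> y \<le> 0" using df by blast
  qed
  hence "exp (-2*\<nu> * s) * (norm (y s))^2 \<le> (norm x)^2"
    by (simp add: f_def y_def power2_norm_eq_inner)
  hence "(norm (y s))^2 \<le> exp (2*\<nu> * s) * (norm x)^2"
    by (simp add: exp_minus field_simps)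
  also have "\<dots> = (exp (s * \<nu>) * norm x)^2"
    by (simp add: power_mult_distrib exp_double[symmetric] mult_ac power2_eq_square exp_add[symmetric])
  finally have "(norm (y s))^2 \<le> (exp (s * \<nu>) * norm x)^2" .
  hence "norm (y s) \<le> exp (s * \<nu>) * norm x" by (rule power2_le_imp_le) simp
  thus ?thesis by (simp add: y_def)
qed

lemma vc_bound:
  fixes B :: "'n::finite op" and y f :: "real \<Rightarrow> complex^'n"
  assumes diss: "\<And>z. (ap B z) \<bullet> z \<le> \<nu> * (norm z)^2"
    and T: "0 \<le> T"
    and dy: "\<And>s. s \<in> {0..T} \<Longrightarrow> (y has_vector_derivative (ap B (y s) + f s)) (at s within {0..T})"
    and y0: "y 0 = 0"
    and fb: "\<And>s. s \<in> {0..T} \<Longrightarrow> norm (f s) \<le> K * exp (s * \<nu>) * s ^ j / fact j"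
  shows "norm (y T) \<le> K * exp (T * \<nu>) * T ^ (Suc j) / fact (Suc j)"
proof -
  define z where "z s = ap (exp ((T - s) *\<^sub>R B)) (y s)" for s
  have dz: "(z has_vector_derivative ap (exp ((T - s) *\<^sub>R B)) (f s)) (at s within {0..T})"
    if "s \<in> {0..T}" for s
  proof -
    have "((\<lambda>t. exp (t *\<^sub>R B)) \<circ> (\<lambda>s. T - s) has_vector_derivative (-1) *\<^sub>R (exp ((T - s) *\<^sub>R B) * B)) (at s)"
      by (rule vector_diff_chain_at) (auto intro!: derivative_eq_intros exp_scaleR_has_vector_derivative_right)
    hence de: "((\<lambda>s. exp ((T - s) *\<^sub>R B)) has_vector_derivative - (exp ((T - s) *\<^sub>R B) * B)) (at s within {0..T})"
      by (simp add: o_def has_vector_derivative_at_within)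
    have "(z has_vector_derivative (ap (exp ((T - s) *\<^sub>R B)) (ap B (y s) + f s) + ap (- (exp ((T - s) *\<^sub>R B) * B)) (y s))) (at s within {0..T})"
      unfolding z_def by (rule ap.has_vector_derivative[OF de dy[OF that]])
    thus ?thesis by (simp add: ap.add_right ap.minus_left)
  qed
  have int1: "((\<lambda>s. ap (exp ((T - s) *\<^sub>R B)) (f s)) has_integral (z T - z 0)) {0..T}"
    by (rule fundamental_theorem_of_calculus[OF T dz]) simp
  have zT: "z T = y T" by (simp add: z_def)
  have z0: "z 0 = 0" by (simp add: z_def y0 ap.zero_right)
  define G where "G s = K * exp (T * \<nu>) * s ^ Suc j / fact (Suc j)" for s
  have dG: "(G has_vector_derivative (K * exp (T * \<nu>) * s ^ j / fact j)) (at s within {0..T})" for s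
  proof -
    have pw: "((\<lambda>s. s ^ Suc j) has_real_derivative (real (Suc j) * s ^ j)) (at s within {0..T})"
      using DERIV_pow[of "Suc j" s "{0..T}"] by simp
    have "(G has_real_derivative K * exp (T * \<nu>) * (real (Suc j) * s ^ j) / fact (Suc j)) (at s within {0..T})"
      unfolding G_def using DERIV_cdivide[OF DERIV_cmult[OF pw, of "K * exp (T * \<nu>)"], of "fact (Suc j)"]
      by (simp add: mult.assoc)
    moreover have "K * exp (T * \<nu>) * (real (Suc j) * s ^ j) / fact (Suc j) = K * exp (T * \<nu>) * s ^ j / fact j"
    proof -
      have "K * exp (T * \<nu>) * (real (Suc j) * s ^ j) / fact (Suc j)
          = (real (Suc j) * (K * exp (T * \<nu>) * s ^ j)) / (real (Suc j) * fact j)"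
        by (simp only: fact_Suc of_nat_id mult_ac)
      also have "\<dots> = K * exp (T * \<nu>) * s ^ j / fact j"
        by (rule mult_divide_mult_cancel_left) simp
      finally show ?thesis .
    qed
    ultimately show ?thesis by (simp add: has_real_derivative_iff_has_vector_derivative mult.assoc)
  qed
  have int2: "((\<lambda>s. K * exp (T * \<nu>) * s ^ j / fact j) has_integral (G T - G 0)) {0..T}"
    by (rule fundamental_theorem_of_calculus[OF T dG])
  have bnd: "norm (ap (exp ((T - s) *\<^sub>R B)) (f s)) \<le> K * exp (T * \<nu>) * s ^ j / fact j"
    if s: "s \<in> {0..T}" for s
  proof -
    have "norm (ap (exp ((T - s) *\<^sub>R B)) (f s)) \<le> exp ((T - s) * \<nu>) * norm (f s)"
      by (rule expbound[OF diss]) (use s in auto)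
    also have "\<dots> \<le> exp ((T - s) * \<nu>) * (K * exp (s * \<nu>) * s ^ j / fact j)"
      by (rule mult_left_mono[OF fb[OF s]]) simp
    also have "\<dots> = K * (exp ((T - s) * \<nu>) * exp (s * \<nu>)) * s ^ j / fact j" by simp
    also have "exp ((T - s) * \<nu>) * exp (s * \<nu>) = exp (T * \<nu>)"
      by (simp add: exp_add[symmetric] algebra_simps)
    finally show ?thesis .
  qed
  have "norm (integral {0..T} (\<lambda>s. ap (exp ((T - s) *\<^sub>R B)) (f s)))
      \<le> integral {0..T} (\<lambda>s. K * exp (T * \<nu>) * s ^ j / fact j)"
    by (rule integral_norm_bound_integral[OF has_integral_integrable[OF int1] has_integral_integrable[OF int2] bnd])
  hence "norm (y T) \<le> G T - G 0"
    using integral_unique[OF int1] integral_unique[OF int2] zT z0 by simp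
  thus ?thesis by (simp add: G_def)
qed




primrec dc :: "complex^'n::finite^'n \<Rightarrow> complex^'n^'n \<Rightarrow> complex^'n \<Rightarrow> nat \<Rightarrow> real \<Rightarrow> complex^'n" where
  "dc A0 A1 u0 0 = (\<lambda>t. ap (exp (t *\<^sub>R mop A0)) u0)"
| "dc A0 A1 u0 (Suc l) = (\<lambda>t. ap (exp (t *\<^sub>R mop A0))
      (integral {0..t} (\<lambda>s. ap (exp (s *\<^sub>R (- mop A0))) (A1 *v dc A0 A1 u0 l s))))"

lemma exp_inv: "exp (t *\<^sub>R B) * exp (t *\<^sub>R (- B)) = (1::'n::finite op)"
proof -
  have "exp (t *\<^sub>R B + t *\<^sub>R (- B)) = exp (t *\<^sub>R B) * exp (t *\<^sub>R (- B))"
    by (rule exp_add_commuting) (simp add: mult_scaleR_left mult_scaleR_right)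
  thus ?thesis by simp
qed

lemma cont_exp: "continuous_on S (\<lambda>s. exp (s *\<^sub>R (B::'n::finite op)))"
  by (rule continuous_on_vector_derivative) (rule exp_scaleR_has_vector_derivative_right)

lemma dc_deriv:
  assumes "t \<in> {0..T}"
  shows "(dc A0 A1 u0 l has_vector_derivative
     (A0 *v dc A0 A1 u0 l t + (if l = 0 then 0 else A1 *v dc A0 A1 u0 (l - 1) t))) (at t within {0..T})"
  using assms
proof (induction l arbitrary: t)
  case 0
  show ?case using exp_deriv_ap[of "mop A0" u0 t "{0..T}"] by simp
next
  case (Suc k)
  let ?B = "mop A0"
  define h where "h s = ap (exp (s *\<^sub>R (- ?B))) (A1 *v dc A0 A1 u0 k s)" for s
  have ck: "continuous_on {0..T} (dc A0 A1 u0 k)"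
    by (rule continuous_on_vector_derivative) (rule Suc.IH)
  have ch: "continuous_on {0..T} h"
    unfolding h_def
    by (rule ap.continuous_on[OF cont_exp bounded_linear.continuous_on[OF bl_mv ck]])
  have dg: "((\<lambda>u. integral {0..u} h) has_vector_derivative h t) (at t within {0..T})"
    by (rule integral_has_vector_derivative[OF ch Suc.prems])
  have de: "((\<lambda>t. exp (t *\<^sub>R ?B)) has_vector_derivative ?B * exp (t *\<^sub>R ?B)) (at t within {0..T})"
    by (rule has_vector_derivative_at_within[OF exp_scaleR_has_vector_derivative_left])
  have "((\<lambda>t. ap (exp (t *\<^sub>R ?B)) (integral {0..t} h)) has_vector_derivative
      ap (exp (t *\<^sub>R ?B)) (h t) + ap (?B * exp (t *\<^sub>R ?B)) (integral {0..t} h)) (at t within {0..T})"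
    by (rule ap.has_vector_derivative[OF de dg])
  moreover have "ap (exp (t *\<^sub>R ?B)) (h t) = A1 *v dc A0 A1 u0 k t"
    unfolding h_def ap_mult[symmetric] mult.assoc[symmetric] exp_inv by simp
  ultimately show ?case by (simp add: h_def[abs_def] add.commute)
qed

lemma dc_zero: "dc A0 A1 u0 (Suc l) 0 = 0"
  by (simp add: ap.zero_right)

lemma diss0: "(ap (mop A0) z) \<bullet> z \<le> lognorm A0 * (norm z)^2"
  by (simp add: lognorm_bound)

lemma mnorm_nonneg: "0 \<le> mnorm A"
  using norm_mop[of A] norm_ge_zero by metis

lemma norm_mv: "norm (A *v x) \<le> mnorm A * norm x"
  using norm_ap[of "mop A" x] by (simp add: norm_mop)

lemma dc_bound:
  assumes "0 \<le> t"
  shows "norm (dc A0 A1 u0 l t) \<le> mnorm A1 ^ l * norm u0 * exp (t * lognorm A0) * t ^ l / fact l"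
  using assms
proof (induction l arbitrary: t)
  case 0
  show ?case using expbound[OF diss0 0, of A0 u0] by (simp add: mult_ac)
next
  case (Suc k)
  have "norm (dc A0 A1 u0 (Suc k) t) \<le> (mnorm A1 ^ Suc k * norm u0) * exp (t * lognorm A0) * t ^ Suc k / fact (Suc k)"
  proof (rule vc_bound[OF diss0 Suc.prems, where f="\<lambda>s. A1 *v dc A0 A1 u0 k s"])
    fix s assume s: "s \<in> {0..t}"
    show "(dc A0 A1 u0 (Suc k) has_vector_derivative ap (mop A0) (dc A0 A1 u0 (Suc k) s) + A1 *v dc A0 A1 u0 k s)
        (at s within {0..t})"
      using dc_deriv[OF s, of A0 A1 u0 "Suc k"] by simp
    have "norm (A1 *v dc A0 A1 u0 k s) \<le> mnorm A1 * norm (dc A0 A1 u0 k s)" by (rule norm_mv)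
    also have "\<dots> \<le> mnorm A1 * (mnorm A1 ^ k * norm u0 * exp (s * lognorm A0) * s ^ k / fact k)"
      by (rule mult_left_mono[OF Suc.IH mnorm_nonneg]) (use s in auto)
    finally show "norm (A1 *v dc A0 A1 u0 k s) \<le> mnorm A1 ^ Suc k * norm u0 * exp (s * lognorm A0) * s ^ k / fact k"
      by (simp add: mult_ac)
  next
    show "dc A0 A1 u0 (Suc k) 0 = 0" by (rule dc_zero)
  qed
  thus ?case by (simp add: mult_ac)
qed


lemma norm_smult_vec: "norm (c *s (v::complex^'n::finite)) = cmod c * norm v"
  unfolding norm_vec_def by (simp add: L2_set_right_distrib norm_mult)

lemma bl_smult: "bounded_linear (\<lambda>v::complex^'n::finite. c *s v)"
  by (rule linear_conv_bounded_linear[THEN iffD1])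
     (auto simp: linear_iff vec_eq_iff cscaleR algebra_simps)

definition Rm :: "complex^'n::finite^'n \<Rightarrow> complex^'n^'n \<Rightarrow> complex^'n \<Rightarrow> complex \<Rightarrow> nat \<Rightarrow> real \<Rightarrow> complex^'n" where
  "Rm A0 A1 u0 e k s = ap (exp (s *\<^sub>R mop (A0 + mscale e A1))) u0 - (\<Sum>l<k. e ^ l *s dc A0 A1 u0 l s)"

lemma ap_Be: "ap (mop (A0 + mscale e A1)) x = A0 *v x + e *s (A1 *v x)"
  by (simp add: matrix_vector_mult_add_rdistrib mscale_mv)

lemma Rm_deriv:
  assumes "s \<in> {0..T}"
  shows "(Rm A0 A1 u0 e k has_vector_derivative
    (ap (mop (A0 + mscale e A1)) (Rm A0 A1 u0 e k s) + (if k = 0 then 0 else e ^ k *s (A1 *v dc A0 A1 u0 (k - 1) s))))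
    (at s within {0..T})"
  using assms
proof (induction k arbitrary: s)
  case 0
  show ?case unfolding Rm_def[abs_def] using exp_deriv_ap[of "mop (A0 + mscale e A1)" u0 s "{0..T}"] by simp
next
  case (Suc k)
  have eq: "Rm A0 A1 u0 e (Suc k) = (\<lambda>s. Rm A0 A1 u0 e k s - e ^ k *s dc A0 A1 u0 k s)"
    by (simp add: Rm_def[abs_def] algebra_simps)
  have d2: "((\<lambda>s. e ^ k *s dc A0 A1 u0 k s) has_vector_derivative
      e ^ k *s (A0 *v dc A0 A1 u0 k s + (if k = 0 then 0 else A1 *v dc A0 A1 u0 (k - 1) s))) (at s within {0..T})"
    by (rule bounded_linear.has_vector_derivative[OF bl_smult dc_deriv[OF Suc.prems]])
  have d: "(Rm A0 A1 u0 e (Suc k) has_vector_derivative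
     (ap (mop (A0 + mscale e A1)) (Rm A0 A1 u0 e k s) + (if k = 0 then 0 else e ^ k *s (A1 *v dc A0 A1 u0 (k - 1) s)))
     - e ^ k *s (A0 *v dc A0 A1 u0 k s + (if k = 0 then 0 else A1 *v dc A0 A1 u0 (k - 1) s))) (at s within {0..T})"
    unfolding eq by (rule has_vector_derivative_diff[OF Suc.IH[OF Suc.prems] d2])
  have "(ap (mop (A0 + mscale e A1)) (Rm A0 A1 u0 e k s) + (if k = 0 then 0 else e ^ k *s (A1 *v dc A0 A1 u0 (k - 1) s)))
     - e ^ k *s (A0 *v dc A0 A1 u0 k s + (if k = 0 then 0 else A1 *v dc A0 A1 u0 (k - 1) s))
    = ap (mop (A0 + mscale e A1)) (Rm A0 A1 u0 e (Suc k) s) + e ^ Suc k *s (A1 *v dc A0 A1 u0 k s)"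
    unfolding eq ap_Be
    by (simp add: vec_eq_iff vector_scalar_commute matrix_vector_mult_diff_distrib algebra_simps)
  with d show ?case by simp
qed

lemma Rm_zero: "Rm A0 A1 u0 e (Suc j) 0 = 0"
proof (induction j)
  case 0 thus ?case by (simp add: Rm_def)
next
  case (Suc j)
  have "Rm A0 A1 u0 e (Suc (Suc j)) 0 = Rm A0 A1 u0 e (Suc j) 0 - e ^ Suc j *s dc A0 A1 u0 (Suc j) 0"
    by (simp add: Rm_def algebra_simps)
  thus ?case using Suc.IH dc_zero by simp
qed

lemma dissB: "(ap (mop (A0 + mscale e A1)) z) \<bullet> z \<le> (lognorm A0 + cmod e * mnorm A1) * (norm z)^2"
proof -
  have "(e *s (A1 *v z)) \<bullet> z \<le> norm (e *s (A1 *v z)) * norm z" by (rule norm_cauchy_schwarz)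
  also have "\<dots> = cmod e * norm (A1 *v z) * norm z" by (simp add: norm_smult_vec)
  also have "\<dots> \<le> cmod e * (mnorm A1 * norm z) * norm z"
    by (intro mult_right_mono mult_left_mono norm_mv) auto
  finally have "(e *s (A1 *v z)) \<bullet> z \<le> cmod e * mnorm A1 * (norm z)^2" by (simp add: power2_eq_square mult_ac)
  moreover have "(A0 *v z) \<bullet> z \<le> lognorm A0 * (norm z)^2" by (rule lognorm_bound)
  ultimately show ?thesis unfolding ap_Be by (simp add: inner_add_left algebra_simps)
qed

lemma rem_bound:
  assumes T: "0 \<le> T"
  shows "norm (Rm A0 A1 u0 e (Suc j) T) \<le> (cmod e ^ Suc j * mnorm A1 ^ Suc j * norm u0)
     * exp (T * (lognorm A0 + cmod e * mnorm A1)) * T ^ Suc j / fact (Suc j)"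
proof (rule vc_bound[OF dissB T, where f="\<lambda>s. e ^ Suc j *s (A1 *v dc A0 A1 u0 j s)"])
  fix s assume s: "s \<in> {0..T}"
  show "(Rm A0 A1 u0 e (Suc j) has_vector_derivative
      ap (mop (A0 + mscale e A1)) (Rm A0 A1 u0 e (Suc j) s) + e ^ Suc j *s (A1 *v dc A0 A1 u0 j s)) (at s within {0..T})"
    using Rm_deriv[OF s, of A0 A1 u0 e "Suc j"] by simp
  have s0: "0 \<le> s" using s by simp
  have "norm (e ^ Suc j *s (A1 *v dc A0 A1 u0 j s)) = cmod e ^ Suc j * norm (A1 *v dc A0 A1 u0 j s)"
    by (simp only: norm_smult_vec norm_power)
  also have "\<dots> \<le> cmod e ^ Suc j * (mnorm A1 * norm (dc A0 A1 u0 j s))"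
    by (intro mult_left_mono norm_mv) auto
  also have "\<dots> \<le> cmod e ^ Suc j * (mnorm A1 * (mnorm A1 ^ j * norm u0 * exp (s * lognorm A0) * s ^ j / fact j))"
    by (intro mult_left_mono dc_bound s0 mnorm_nonneg) auto
  also have "\<dots> \<le> cmod e ^ Suc j * (mnorm A1 * (mnorm A1 ^ j * norm u0 * exp (s * (lognorm A0 + cmod e * mnorm A1)) * s ^ j / fact j))"
  proof -
    have "exp (s * lognorm A0) \<le> exp (s * (lognorm A0 + cmod e * mnorm A1))"
      using s0 mnorm_nonneg[of A1] by (simp add: algebra_simps)
    thus ?thesis
      by (intro mult_left_mono divide_right_mono mult_right_mono mnorm_nonneg) (auto simp: s0 mnorm_nonneg)
  qed
  also have "\<dots> = (cmod e ^ Suc j * mnorm A1 ^ Suc j * norm u0) * exp (s * (lognorm A0 + cmod e * mnorm A1)) * s ^ j / fact j"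
    by (simp add: mult_ac)
  finally show "norm (e ^ Suc j *s (A1 *v dc A0 A1 u0 j s)) \<le> (cmod e ^ Suc j * mnorm A1 ^ Suc j * norm u0) * exp (s * (lognorm A0 + cmod e * mnorm A1)) * s ^ j / fact j" .
next
  show "Rm A0 A1 u0 e (Suc j) 0 = 0" by (rule Rm_zero)
qed




lemma powser_coeff_zero:
  fixes a :: "nat \<Rightarrow> complex"
  assumes h: "\<And>z. (\<lambda>n. a n * z ^ n) sums 0"
  shows "a m = 0"
proof (induction m rule: less_induct)
  case (less m)
  have sh: "(\<lambda>n. a (n + m) * z ^ n) sums 0" if z: "z \<noteq> 0" for z
  proof -
    have s0: "(\<Sum>i<m. a i * z ^ i) = 0" using less.IH by simp
    have "(\<lambda>n. a n * z ^ n) sums (0 + (\<Sum>i<m. a i * z ^ i))" unfolding s0 using h[of z] by simp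
    hence "(\<lambda>i. a (i + m) * z ^ (i + m)) sums 0"
      by (rule sums_iff_shift[THEN iffD2])
    from sums_mult[OF this, of "inverse (z ^ m)"]
    have "(\<lambda>i. inverse (z ^ m) * (a (i + m) * z ^ (i + m))) sums (inverse (z ^ m) * 0)" .
    moreover have "(\<lambda>i. inverse (z ^ m) * (a (i + m) * z ^ (i + m))) = (\<lambda>i. a (i + m) * z ^ i)"
    proof
      fix i
      have "z ^ m \<noteq> 0" using z by simp
      thus "inverse (z ^ m) * (a (i + m) * z ^ (i + m)) = a (i + m) * z ^ i"
        by (simp add: power_add)
    qed
    ultimately show ?thesis by simp
  qed
  have L1: "((\<lambda>x. 0) \<longlongrightarrow> (\<lambda>n. a (n + m)) 0) (at (0::complex))"
    by (rule powser_limit_0_strong[where s=1 and a="\<lambda>n. a (n + m)" and f="\<lambda>x. 0"]) (simp_all add: sh)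
  have L2: "((\<lambda>x. 0) \<longlongrightarrow> (0::complex)) (at (0::complex))" by (rule tendsto_const)
  have "(\<lambda>n. a (n + m)) 0 = 0" by (rule tendsto_unique[OF at_neq_bot L1 L2])
  thus ?case by simp
qed

lemma powser_vec_unique:
  fixes c d :: "nat \<Rightarrow> complex^'n::finite"
  assumes c: "\<And>e. (\<lambda>l. e ^ l *s c l) sums u e" and d: "\<And>e. (\<lambda>l. e ^ l *s d l) sums u e"
  shows "c = d"
proof (rule ext, subst vec_eq_iff, rule allI)
  fix l i
  have "(\<lambda>n. (c n $ i - d n $ i) * z ^ n) sums 0" for z
  proof -
    have "(\<lambda>n. z ^ n *s c n - z ^ n *s d n) sums (u z - u z)" by (rule sums_diff[OF c d])
    from bounded_linear.sums[OF bounded_linear_vec_nth this, of i]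
    show ?thesis by (simp add: algebra_simps)
  qed
  from powser_coeff_zero[OF this] show "c l $ i = d l $ i" by simp
qed

lemma mop_scale: "mop (mscale (complex_of_real t) M) = t *\<^sub>R mop M"
  by (rule op_eqI) (simp add: mscale_mv ap.scaleR_left ofreal_smult)

lemma usol_ap: "usol A0 A1 u0 t e = ap (exp (t *\<^sub>R mop (A0 + mscale e A1))) u0"
  by (simp add: usol_def mexp_ap mop_scale)

lemma series:
  assumes T: "0 \<le> T"
  shows "(\<lambda>l. e ^ l *s dc A0 A1 u0 l T) sums usol A0 A1 u0 T e"
proof -
  let ?u = "usol A0 A1 u0 T e"
  define x where "x = cmod e * mnorm A1 * T"
  define C where "C = norm u0 * exp (T * (lognorm A0 + cmod e * mnorm A1))"
  have x0: "(\<lambda>n. x ^ n /\<^sub>R fact n) \<longlonglongrightarrow> 0"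
    by (rule summable_LIMSEQ_zero[OF summable_exp_generic])
  have "(\<lambda>n. x ^ n /\<^sub>R fact n) = (\<lambda>n. x ^ n / fact n)"
    by (rule ext) (simp add: divide_inverse mult.commute)
  with x0 have "(\<lambda>n. x ^ n / fact n) \<longlonglongrightarrow> 0" by simp
  hence "(\<lambda>n. x ^ Suc n / fact (Suc n)) \<longlonglongrightarrow> 0" by (rule LIMSEQ_Suc)
  hence "(\<lambda>n. C * (x ^ Suc n / fact (Suc n))) \<longlonglongrightarrow> C * 0"
    by (intro tendsto_mult tendsto_const)
  hence lim: "(\<lambda>n. C * (x ^ Suc n / fact (Suc n))) \<longlonglongrightarrow> 0" by simp
  have "(\<lambda>n. Rm A0 A1 u0 e (Suc n) T) \<longlonglongrightarrow> 0"
  proof (rule Lim_null_comparison[OF _ lim])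
    show "\<forall>\<^sub>F n in sequentially. norm (Rm A0 A1 u0 e (Suc n) T) \<le> C * (x ^ Suc n / fact (Suc n))"
    proof (rule always_eventually, rule allI)
      fix n
      have "norm (Rm A0 A1 u0 e (Suc n) T) \<le> (cmod e ^ Suc n * mnorm A1 ^ Suc n * norm u0)
          * exp (T * (lognorm A0 + cmod e * mnorm A1)) * T ^ Suc n / fact (Suc n)"
        by (rule rem_bound[OF T])
      also have "\<dots> = C * (x ^ Suc n / fact (Suc n))"
        by (simp add: C_def x_def power_mult_distrib mult_ac)
      finally show "norm (Rm A0 A1 u0 e (Suc n) T) \<le> C * (x ^ Suc n / fact (Suc n))" .
    qed
  qed
  hence "(\<lambda>n. Rm A0 A1 u0 e n T) \<longlonglongrightarrow> 0" by (rule LIMSEQ_imp_Suc)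
  hence "(\<lambda>n. ?u - Rm A0 A1 u0 e n T) \<longlonglongrightarrow> ?u - 0" by (intro tendsto_diff tendsto_const)
  hence "(\<lambda>n. \<Sum>l<n. e ^ l *s dc A0 A1 u0 l T) \<longlonglongrightarrow> ?u"
    by (simp add: Rm_def usol_ap)
  thus ?thesis by (simp add: sums_def)
qed

lemma taylor_eq:
  assumes T: "0 \<le> T"
  shows "taylor_coeff A0 A1 u0 T = (\<lambda>l. dc A0 A1 u0 l T)"
  unfolding taylor_coeff_def
proof (rule the_equality)
  show "\<forall>e. (\<lambda>l. e ^ l *s dc A0 A1 u0 l T) sums usol A0 A1 u0 T e" using series[OF T] by blast
  fix c assume "\<forall>e. (\<lambda>l. e ^ l *s c l) sums usol A0 A1 u0 T e"
  thus "c = (\<lambda>l. dc A0 A1 u0 l T)"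
    using powser_vec_unique[of c "\<lambda>e. usol A0 A1 u0 T e" "\<lambda>l. dc A0 A1 u0 l T"] series[OF T] by blast
qed

theorem mainTheorem6:
  fixes A0 A1 :: "complex^'n^'n" and u0 :: "complex^'n" and t :: real
    and \<epsilon> :: complex and k :: nat
  assumes "t \<ge> 0" and "k \<ge> 1"
  shows "norm (usol A0 A1 u0 t \<epsilon> - (\<Sum>l<k. (\<epsilon> ^ l) *s taylor_coeff A0 A1 u0 t l))
    \<le> exp (t * (lognorm A0 + cmod \<epsilon> * mnorm A1)) * (cmod \<epsilon> * mnorm (mscale (of_real t) A1)) ^ k
       / fact k * norm u0"
proof -
  obtain j where k: "k = Suc j" using assms(2) by (cases k) auto
  have e1: "usol A0 A1 u0 t \<epsilon> - (\<Sum>l<k. (\<epsilon> ^ l) *s taylor_coeff A0 A1 u0 t l) = Rm A0 A1 u0 \<epsilon> (Suc j) t"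
    unfolding taylor_eq[OF assms(1)] Rm_def usol_ap k ..
  have e2: "mnorm (mscale (of_real t) A1) = t * mnorm A1"
    using assms(1) by (simp add: norm_mop[symmetric] mop_scale)
  have e3: "(cmod \<epsilon> ^ Suc j * mnorm A1 ^ Suc j * norm u0) * exp (t * (lognorm A0 + cmod \<epsilon> * mnorm A1))
      * t ^ Suc j / fact (Suc j)
    = exp (t * (lognorm A0 + cmod \<epsilon> * mnorm A1)) * (cmod \<epsilon> * (t * mnorm A1)) ^ Suc j / fact (Suc j) * norm u0"
    by (simp only: power_mult_distrib) (simp add: field_simps)
  have "norm (usol A0 A1 u0 t \<epsilon> - (\<Sum>l<k. (\<epsilon> ^ l) *s taylor_coeff A0 A1 u0 t l)) = norm (Rm A0 A1 u0 \<epsilon> (Suc j) t)"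
    by (simp only: e1)
  also have "\<dots> \<le> (cmod \<epsilon> ^ Suc j * mnorm A1 ^ Suc j * norm u0) * exp (t * (lognorm A0 + cmod \<epsilon> * mnorm A1))
      * t ^ Suc j / fact (Suc j)"
    by (rule rem_bound[OF assms(1)])
  also have "\<dots> = exp (t * (lognorm A0 + cmod \<epsilon> * mnorm A1)) * (cmod \<epsilon> * mnorm (mscale (of_real t) A1)) ^ k
       / fact k * norm u0"
    unfolding e3 e2 k ..
  finally show ?thesis .
qed


end
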